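(* (i) For every $K>0$ and every stable phase-locked steady state $\theta^*$ of the Kuramoto network with coupling strength $K$, one has $r_{\rm uni}(\theta^* )>0$. (ii) If $K\mapsto\theta^*(K)$, $K\in I$ ($I\subset(0,\infty)$ an open interval), is a continuously differentiable family of stable phase-locked steady states, then $K\mapsto r_{\rm uni}(\theta^*(K))$ is monotonically non-decreasing on $I$, and if $\omega\neq 0$ it is strictly increasing, with $\frac{d r_{\rm uni}(\theta^*(K))}{dK}>0$ for all $K\in I$.
   Context: Kuramoto network: $N\ge 2$ oscillators with phases $\theta_i(t)$ obeying $\frac{d\theta_i}{dt}=\omega_i+K\sum_{j=1}^N A_{i,j}\sin(\theta_j-\theta_i)$, where $\omega=(\omega_1,\dots,\omega_N)^T\in\mathbb{R}^N$ are natural frequencies with $\sum_{i=1}^N\omega_i=0$, $K>0$ is the coupling strength, and $A=(A_{i,j})$ is the symmetric adjacency matrix ($A_{i,j}=A_{j,i}\in\{0,1\}$, $A_{i,i}=0$) of a connected undirected graph; $k_i=\sum_j A_{i,j}$ is the degree of node $i$. A phase-locked steady state is a vector $\theta^*\in\mathbb{R}^N$ with $\omega_i+K\sum_j A_{i,j}\sin(\theta_j^*-\theta_i^* )=0$ for all $i$. Its Jacobian $J$ is the symmetric matrix with $J_{i,j}=KA_{i,j}\cos(\theta_i^*-\theta_j^* )$ for $i\neq j$ and $J_{i,i}=-K\sum_j A_{i,j}\cos(\theta_i^*-\theta_j^* )$; it always has eigenvalue $\lambda_1=0$ with eigenvector $(1,\dots,1)^T$. The state is called stable if all remaining eigenvalues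 $\lambda_2,\dots,\lambda_N$ of $J$ are strictly negative. The order parameter is $r_{\rm uni}=\frac{1}{\sum_i k_i}\sum_{i,j}A_{i,j}\langle\cos(\theta_i-\theta_j)\rangle_t$, which for a steady state equals $r_{\rm uni}(\theta^* )=\frac{1}{\sum_i k_i}\sum_{i,j}A_{i,j}\cos(\theta_i^*-\theta_j^* )$. *)

theory Defs
  imports Complex_Main "Jordan_Normal_Form.Char_Poly"
begin

text \<open>Oscillators are indexed by 0..N-1. Adjacency matrix A, natural frequencies om,
phases th are functions on nat, only their values below N matter.\<close>

definition adjacency_ok :: "nat \<Rightarrow> (nat \<Rightarrow> nat \<Rightarrow> real) \<Rightarrow> bool" where
  "adjacency_ok N A \<longleftrightarrow>
     (\<forall>i<N. \<forall>j<N. A i j = A j i \<and> (A i j = 0 \<or> A i j = 1)) \<and> (\<forall>i<N. A i i = 0)"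

definition graph_connected :: "nat \<Rightarrow> (nat \<Rightarrow> nat \<Rightarrow> real) \<Rightarrow> bool" where
  "graph_connected N A \<longleftrightarrow>
     (\<forall>i<N. \<forall>j<N. (\<lambda>x y. x < N \<and> y < N \<and> A x y = 1)\<^sup>*\<^sup>* i j)"

definition degree :: "nat \<Rightarrow> (nat \<Rightarrow> nat \<Rightarrow> real) \<Rightarrow> nat \<Rightarrow> real" where
  "degree N A i = (\<Sum>j<N. A i j)"

definition steady_state ::
  "nat \<Rightarrow> (nat \<Rightarrow> nat \<Rightarrow> real) \<Rightarrow> (nat \<Rightarrow> real) \<Rightarrow> real \<Rightarrow> (nat \<Rightarrow> real) \<Rightarrow> bool" where
  "steady_state N A om K th \<longleftrightarrow>
     (\<forall>i<N. om i + K * (\<Sum>j<N. A i j * sin (th j - th i)) = 0)"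

definition jacobian ::
  "nat \<Rightarrow> (nat \<Rightarrow> nat \<Rightarrow> real) \<Rightarrow> real \<Rightarrow> (nat \<Rightarrow> real) \<Rightarrow> real mat" where
  "jacobian N A K th = mat N N (\<lambda>(i, j).
     if i = j then - K * (\<Sum>l<N. A i l * cos (th i - th l))
     else K * A i j * cos (th i - th j))"

text \<open>Stability: the eigenvalues of J, counted with algebraic multiplicity, are
lambda_1 = 0 and lambda_2, ..., lambda_N, all strictly negative.\<close>
definition stable_jac :: "nat \<Rightarrow> real mat \<Rightarrow> bool" where
  "stable_jac N J \<longleftrightarrow>
     (\<exists>ls :: real list. length ls = N - 1 \<and> (\<forall>l\<in>set ls. l < 0) \<and>
        char_poly J = (\<Prod>l\<leftarrow>0 # ls. [:- l, 1:]))"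

definition stable_steady_state ::
  "nat \<Rightarrow> (nat \<Rightarrow> nat \<Rightarrow> real) \<Rightarrow> (nat \<Rightarrow> real) \<Rightarrow> real \<Rightarrow> (nat \<Rightarrow> real) \<Rightarrow> bool" where
  "stable_steady_state N A om K th \<longleftrightarrow>
     steady_state N A om K th \<and> stable_jac N (jacobian N A K th)"

definition r_uni :: "nat \<Rightarrow> (nat \<Rightarrow> nat \<Rightarrow> real) \<Rightarrow> (nat \<Rightarrow> real) \<Rightarrow> real" where
  "r_uni N A th = (\<Sum>i<N. \<Sum>j<N. A i j * cos (th i - th j)) / (\<Sum>i<N. degree N A i)"

end

theory Submission
  imports Defs "HOL-Analysis.Analysis"
begin

definition qf :: "nat \<Rightarrow> (nat \<Rightarrow> nat \<Rightarrow> real) \<Rightarrow> (nat \<Rightarrow> real) \<Rightarrow> real" where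
  "qf N m v = (\<Sum>i<N. \<Sum>j<N. m i j * v i * v j)"

lemma eig_root:
  fixes M :: "real mat"
  assumes M: "M \<in> carrier_mat N N"
    and ev: "\<forall>i<N. (\<Sum>j<N. M $$ (i,j) * v j) = mu * v i"
    and nz: "i0 < N" "v i0 \<noteq> 0"
  shows "poly (char_poly M) mu = 0"
proof -
  have "eigenvalue M mu"
    unfolding eigenvalue_def eigenvector_def
  proof (intro exI[of _ "Matrix.vec N v"] conjI)
    show "Matrix.vec N v \<in> carrier_vec (dim_row M)" using M by auto
    show "Matrix.vec N v \<noteq> 0\<^sub>v (dim_row M)" using M nz
      by (metis carrier_matD(1) index_vec index_zero_vec(1))
    show "M *\<^sub>v Matrix.vec N v = mu \<cdot>\<^sub>v Matrix.vec N v"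
    proof (rule eq_vecI)
      fix i assume "i < dim_vec (mu \<cdot>\<^sub>v Matrix.vec N v)"
      then have i: "i < N" by simp
      have "(M *\<^sub>v Matrix.vec N v) $ i = (\<Sum>j<N. M $$ (i,j) * v j)"
        using M i by (simp add: mult_mat_vec_def scalar_prod_def atLeast0LessThan mult.commute)
      then show "(M *\<^sub>v Matrix.vec N v) $ i = (mu \<cdot>\<^sub>v Matrix.vec N v) $ i" using ev i by simp
    qed (use M in auto)
  qed
  then show ?thesis using eigenvalue_root_char_poly[OF M] by simp
qed

lemma compact_sphere:
  "compact {v::nat\<Rightarrow>real. (\<forall>i. i \<ge> N \<longrightarrow> v i = 0) \<and> (\<Sum>i<N. (v i)^2) = 1}"
proof -
  let ?B = "\<lambda>i::nat. if i < N then {-1..1::real} else {0}"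
  have "compactin (product_topology (\<lambda>_. euclidean) UNIV) (PiE UNIV ?B)"
    by (subst compactin_PiE) auto
  then have c: "compact (PiE UNIV ?B)"
    by (metis compactin_euclidean_iff euclidean_product_topology)
  have cl: "closed {v::nat\<Rightarrow>real. (\<Sum>i<N. (v i)^2) = 1}"
    by (intro closed_Collect_eq continuous_intros) (auto simp: continuous_on_product_coordinates)
  have bnd: "v i \<in> {-1..1}" if a: "(\<Sum>i<N. (v i)^2) = 1" and i: "i < N" for v :: "nat \<Rightarrow> real" and i
  proof -
    have "(v i)^2 \<le> (\<Sum>i<N. (v i)^2)"
      by (rule member_le_sum) (use i in auto)
    then have "(v i)^2 \<le> 1" using a by simp
    then have "\<bar>v i\<bar> \<le> 1" using abs_le_square_iff[of "v i" 1] by simp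
    then show ?thesis by auto
  qed
  have sub: "{v::nat\<Rightarrow>real. (\<forall>i. i \<ge> N \<longrightarrow> v i = 0) \<and> (\<Sum>i<N. (v i)^2) = 1}
     = PiE UNIV ?B \<inter> {v. (\<Sum>i<N. (v i)^2) = 1}"
    using bnd by (auto simp: PiE_iff split: if_splits)
  show ?thesis unfolding sub by (rule compact_Int_closed[OF c cl])
qed
definition symm :: "nat \<Rightarrow> (nat \<Rightarrow> nat \<Rightarrow> real) \<Rightarrow> bool" where
  "symm N m \<longleftrightarrow> (\<forall>i<N. \<forall>j<N. m i j = m j i)"

lemma qf_expand:
  assumes "symm N m"
  shows "qf N m (\<lambda>i. v i + t * w i) = qf N m v + 2 * t * (\<Sum>i<N. w i * (\<Sum>j<N. m i j * v j)) + t^2 * qf N m w"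
proof -
  have sw: "(\<Sum>i<N. \<Sum>j<N. m i j * v i * w j) = (\<Sum>i<N. \<Sum>j<N. m i j * w i * v j)"
    apply (subst sum.swap)
    apply (rule sum.cong, simp, rule sum.cong, simp)
    using assms unfolding symm_def by (auto simp: mult.commute)
  have "qf N m (\<lambda>i. v i + t * w i) = (\<Sum>i<N. \<Sum>j<N. m i j * v i * v j + t * (m i j * v i * w j) + t * (m i j * w i * v j) + t^2 * (m i j * w i * w j))"
    unfolding qf_def by (intro sum.cong refl) (simp add: algebra_simps power2_eq_square)
  also have "\<dots> = qf N m v + t * (\<Sum>i<N. \<Sum>j<N. m i j * v i * w j) + t * (\<Sum>i<N. \<Sum>j<N. m i j * w i * v j) + t^2 * qf N m w"
    unfolding qf_def by (simp add: sum.distrib sum_distrib_left)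
  also have "\<dots> = qf N m v + 2 * t * (\<Sum>i<N. w i * (\<Sum>j<N. m i j * v j)) + t^2 * qf N m w"
    unfolding sw by (simp add: sum_distrib_left algebra_simps)
  finally show ?thesis .
qed

lemma quad_nonpos:
  fixes a b :: real
  assumes "\<forall>t>0. a * t + b * t^2 \<le> 0"
  shows "a \<le> 0"
proof (rule ccontr)
  assume "\<not> a \<le> 0"
  then have a: "a > 0" by simp
  define t where "t = a / (\<bar>b\<bar> + 1)"
  have t: "t > 0" unfolding t_def using a by simp
  have "t * \<bar>b\<bar> < a" unfolding t_def using a
    by (simp add: field_simps)
  then have h1: "t * (t * \<bar>b\<bar>) < a * t" using t by (simp add: mult.commute)
  have h2: "- (\<bar>b\<bar> * t^2) \<le> b * t^2"
    using mult_right_mono[of "- \<bar>b\<bar>" b "t^2"] by auto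
  have h3: "\<bar>b\<bar> * t^2 = t * (t * \<bar>b\<bar>)" by (simp add: power2_eq_square)
  have "a * t + b * t^2 > 0" using h1 h2 h3 by linarith
  with assms t show False by auto
qed

lemma sumsq_zero:
  fixes r :: "nat \<Rightarrow> real"
  assumes "(\<Sum>i<N. r i * r i) \<le> 0"
  shows "\<forall>i<N. r i = 0"
proof -
  have "(\<Sum>i<N. r i * r i) \<ge> 0" by (rule sum_nonneg) simp
  then have "(\<Sum>i<N. r i * r i) = 0" using assms by linarith
  then have "\<forall>i\<in>{..<N}. r i * r i = 0" by (subst sum_nonneg_eq_0_iff[symmetric]) auto
  then show ?thesis by simp
qed

lemma rayleigh:
  assumes N: "N \<ge> 1" and sym: "symm N m"
  shows "\<exists>mu v. (\<forall>i<N. (\<Sum>j<N. m i j * v j) = mu * v i) \<and> (\<exists>i<N. v i \<noteq> 0)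
     \<and> (\<forall>u. qf N m u \<le> mu * (\<Sum>i<N. (u i)^2))"
proof -
  define S where "S = {v::nat\<Rightarrow>real. (\<forall>i. i \<ge> N \<longrightarrow> v i = 0) \<and> (\<Sum>i<N. (v i)^2) = 1}"
  have cS: "compact S" using compact_sphere S_def by simp
  have e0: "(\<lambda>i. if i = 0 then 1 else 0::real) \<in> S"
  proof -
    have "(\<Sum>i<N. ((\<lambda>i. if i = 0 then 1 else 0::real) i)^2) = (\<Sum>i<N. if i = 0 then 1 else 0)"
      by (rule sum.cong) auto
    also have "\<dots> = 1" using N by (subst sum.delta) auto
    finally show ?thesis unfolding S_def using N by auto
  qed
  have contU: "continuous_on UNIV (qf N m)" unfolding qf_def
    by (intro continuous_intros) (auto simp: continuous_on_product_coordinates)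
  have cont: "continuous_on S (qf N m)" by (rule continuous_on_subset[OF contU]) auto
  obtain v where vS: "v \<in> S" and vmax: "\<forall>y\<in>S. qf N m y \<le> qf N m v"
    using continuous_attains_sup[OF cS _ cont] e0 by blast
  define mu where "mu = qf N m v"
  have gen: "qf N m u \<le> mu * (\<Sum>i<N. (u i)^2)" for u
  proof -
    define s where "s = (\<Sum>i<N. (u i)^2)"
    have s0: "s \<ge> 0" unfolding s_def by (simp add: sum_nonneg)
    show ?thesis
    proof (cases "s = 0")
      case True
      then have "\<forall>i\<in>{..<N}. (u i)^2 = 0" unfolding s_def
        by (subst sum_nonneg_eq_0_iff[symmetric]) auto
      then have "\<forall>i<N. u i = 0" by simp
      then have "qf N m u = 0" unfolding qf_def by simp
      then show ?thesis using True s_def by simp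
    next
      case False
      then have sp: "s > 0" using s0 by simp
      define u' where "u' = (\<lambda>i. if i < N then u i / sqrt s else 0)"
      have "(\<Sum>i<N. (u' i)^2) = (\<Sum>i<N. (u i)^2 / s)"
        unfolding u'_def by (rule sum.cong) (use sp in \<open>auto simp: power_divide\<close>)
      also have "\<dots> = 1" using sp unfolding s_def by (simp add: sum_divide_distrib[symmetric])
      finally have "u' \<in> S" unfolding S_def u'_def by auto
      then have le: "qf N m u' \<le> mu" using vmax mu_def by auto
      have "qf N m u' = (\<Sum>i<N. \<Sum>j<N. m i j * u i * u j / s)"
        unfolding qf_def u'_def
        by (intro sum.cong refl) (use sp in \<open>auto simp: field_simps\<close>)
      also have "\<dots> = qf N m u / s" unfolding qf_def by (simp add: sum_divide_distrib)
      finally have "qf N m u / s \<le> mu" using le by simp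
      then show ?thesis using sp unfolding s_def[symmetric] by (simp add: field_simps mult.commute)
    qed
  qed
  have v1: "(\<Sum>i<N. (v i)^2) = 1" using vS S_def by simp
  define r where "r i = (\<Sum>j<N. m i j * v j) - mu * v i" for i
  have "\<forall>t>0. (2 * (\<Sum>i<N. r i * r i)) * t + (qf N m r - mu * (\<Sum>i<N. (r i)^2)) * t^2 \<le> 0"
  proof (intro allI impI)
    fix t :: real assume "t > 0"
    have g: "qf N m (\<lambda>i. v i + t * r i) \<le> mu * (\<Sum>i<N. (v i + t * r i)^2)" by (rule gen)
    have e1: "(\<Sum>i<N. (v i + t * r i)^2) = 1 + 2 * t * (\<Sum>i<N. v i * r i) + t^2 * (\<Sum>i<N. (r i)^2)"
    proof -
      have "(\<Sum>i<N. (v i + t * r i)^2) = (\<Sum>i<N. (v i)^2 + 2 * t * (v i * r i) + t^2 * (r i)^2)"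
        by (rule sum.cong) (auto simp: power2_eq_square algebra_simps)
      also have "\<dots> = (\<Sum>i<N. (v i)^2) + 2 * t * (\<Sum>i<N. v i * r i) + t^2 * (\<Sum>i<N. (r i)^2)"
        by (simp add: sum.distrib sum_distrib_left)
      finally show ?thesis using v1 by simp
    qed
    have e2: "(\<Sum>i<N. r i * (\<Sum>j<N. m i j * v j)) = (\<Sum>i<N. r i * r i) + mu * (\<Sum>i<N. v i * r i)"
    proof -
      have "(\<Sum>i<N. r i * (\<Sum>j<N. m i j * v j)) = (\<Sum>i<N. r i * r i + mu * (v i * r i))"
        by (rule sum.cong) (auto simp: r_def algebra_simps)
      then show ?thesis by (simp add: sum.distrib sum_distrib_left)
    qed
    from g[unfolded qf_expand[OF sym] e1 e2 mu_def[symmetric]]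
    show "(2 * (\<Sum>i<N. r i * r i)) * t + (qf N m r - mu * (\<Sum>i<N. (r i)^2)) * t^2 \<le> 0"
      by (simp add: algebra_simps)
  qed
  from quad_nonpos[OF this] have "(\<Sum>i<N. r i * r i) \<le> 0" by simp
  from sumsq_zero[OF this] have ev: "\<forall>i<N. (\<Sum>j<N. m i j * v j) = mu * v i"
    unfolding r_def by simp
  have nz: "\<exists>i<N. v i \<noteq> 0"
  proof (rule ccontr)
    assume "\<not> ?thesis"
    then have "(\<Sum>i<N. (v i)^2) = 0" by simp
    then show False using v1 by simp
  qed
  show ?thesis apply (rule exI[of _ mu], rule exI[of _ v]) using ev nz gen by simp
qed

lemma ker:
  assumes sym: "symm N m" and nsd: "\<forall>u. qf N m u \<le> 0" and q0: "qf N m v = 0"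
  shows "\<forall>i<N. (\<Sum>j<N. m i j * v j) = 0"
proof -
  define w where "w i = (\<Sum>j<N. m i j * v j)" for i
  have "\<forall>t>0. (2 * (\<Sum>i<N. w i * w i)) * t + qf N m w * t^2 \<le> 0"
  proof (intro allI impI)
    fix t :: real assume "t > 0"
    have "qf N m (\<lambda>i. v i + t * w i) \<le> 0" using nsd by simp
    then show "(2 * (\<Sum>i<N. w i * w i)) * t + qf N m w * t^2 \<le> 0"
      unfolding qf_expand[OF sym] q0 w_def by (simp add: algebra_simps)
  qed
  from quad_nonpos[OF this] have "(\<Sum>i<N. w i * w i) \<le> 0" by simp
  from sumsq_zero[OF this] show ?thesis unfolding w_def by simp
qed

lemma nsd:
  fixes M :: "real mat"
  assumes M: "M \<in> carrier_mat N N" and sym: "symm N (\<lambda>i j. M $$ (i,j))" and N: "N \<ge> 1"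
    and roots: "\<forall>x. poly (char_poly M) x = 0 \<longrightarrow> x \<le> 0"
  shows "qf N (\<lambda>i j. M $$ (i,j)) u \<le> 0"
proof -
  obtain mu v where ev: "\<forall>i<N. (\<Sum>j<N. M $$ (i,j) * v j) = mu * v i"
    and nz: "\<exists>i<N. v i \<noteq> 0" and g: "\<forall>u. qf N (\<lambda>i j. M $$ (i,j)) u \<le> mu * (\<Sum>i<N. (u i)^2)"
    using rayleigh[OF N sym] by blast
  from nz obtain i0 where "i0 < N" "v i0 \<noteq> 0" by blast
  from eig_root[OF M ev this] roots have "mu \<le> 0" by blast
  moreover have "(\<Sum>i<N. (u i)^2) \<ge> 0" by (simp add: sum_nonneg)
  ultimately have "mu * (\<Sum>i<N. (u i)^2) \<le> 0" by (rule mult_nonpos_nonneg)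
  then show ?thesis using g[rule_format, of u] by linarith
qed

lemma poly_prod_root: "poly (\<Prod>l\<leftarrow>xs. [:- l, 1:]) x = 0 \<longleftrightarrow> x \<in> set (xs :: real list)"
  by (induction xs) auto

lemma zero_mat_root:
  fixes M :: "real mat"
  assumes M: "M \<in> carrier_mat N N" and z: "\<forall>i<N. \<forall>j<N. M $$ (i,j) = 0"
    and r: "poly (char_poly M) l = 0"
  shows "l = 0"
proof -
  have "eigenvalue M l" using r eigenvalue_root_char_poly[OF M] by simp
  then obtain v where v: "v \<in> carrier_vec N" "v \<noteq> 0\<^sub>v N" "M *\<^sub>v v = l \<cdot>\<^sub>v v"
    unfolding eigenvalue_def eigenvector_def using M by auto
  obtain i where i: "i < N" "v $ i \<noteq> 0"
  proof -
    have "\<exists>i<N. v $ i \<noteq> 0"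
    proof (rule ccontr)
      assume "\<not> ?thesis"
      then have "v = 0\<^sub>v N" using v(1) by (intro eq_vecI) auto
      then show False using v(2) by simp
    qed
    then show ?thesis using that by blast
  qed
  have "(M *\<^sub>v v) $ i = (\<Sum>j<N. M $$ (i,j) * v $ j)"
    using M v(1) i by (simp add: mult_mat_vec_def scalar_prod_def atLeast0LessThan)
  also have "\<dots> = 0" using z i by simp
  finally have "l * v $ i = 0" using v(3) i v(1) by (metis index_smult_vec(1) carrier_vecD)
  then show ?thesis using i by simp
qed

abbreviation Jm :: "nat \<Rightarrow> (nat \<Rightarrow> nat \<Rightarrow> real) \<Rightarrow> real \<Rightarrow> (nat \<Rightarrow> real) \<Rightarrow> nat \<Rightarrow> nat \<Rightarrow> real" where
  "Jm N A K th \<equiv> (\<lambda>i j. Defs.jacobian N A K th $$ (i,j))"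

lemma jac_carrier: "Defs.jacobian N A K th \<in> carrier_mat N N"
  unfolding Defs.jacobian_def by simp

lemma jac_entry: "i < N \<Longrightarrow> j < N \<Longrightarrow> Jm N A K th i j =
   (if i = j then - K * (\<Sum>l<N. A i l * cos (th i - th l)) else K * A i j * cos (th i - th j))"
  unfolding Defs.jacobian_def by simp

lemma jac_symm:
  assumes adj: "adjacency_ok N A"
  shows "symm N (Jm N A K th)"
  unfolding symm_def
proof (intro allI impI)
  fix i j assume "i < N" "j < N"
  moreover have "cos (th i - th j) = cos (th j - th i)" by (metis cos_minus minus_diff_eq)
  ultimately show "Jm N A K th i j = Jm N A K th j i" using adj
    unfolding adjacency_ok_def by (simp add: jac_entry)
qed

lemma jac_row:
  assumes adj: "adjacency_ok N A" and i: "i < N"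
  shows "(\<Sum>j<N. Jm N A K th i j * v j) = K * (\<Sum>j<N. A i j * cos (th i - th j) * (v j - v i))"
proof -
  have Aii: "A i i = 0" using adj i unfolding adjacency_ok_def by simp
  have "(\<Sum>j<N. Jm N A K th i j * v j) = (\<Sum>j<N. K * (A i j * cos (th i - th j) * v j)
          - (if j = i then K * (\<Sum>l<N. A i l * cos (th i - th l)) * v i else 0))"
    by (rule sum.cong) (auto simp: jac_entry i Aii)
  also have "\<dots> = K * (\<Sum>j<N. A i j * cos (th i - th j) * v j) - K * (\<Sum>l<N. A i l * cos (th i - th l)) * v i"
    using i by (simp add: sum_subtractf sum_distrib_left)
  also have "\<dots> = K * (\<Sum>j<N. A i j * cos (th i - th j) * (v j - v i))"
    by (simp add: right_diff_distrib sum_subtractf sum_distrib_left sum_distrib_right algebra_simps)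
  finally show ?thesis .
qed

lemma stable_facts:
  assumes N2: "N \<ge> 2" and adj: "adjacency_ok N A"
    and st: "stable_jac N (Defs.jacobian N A K th)"
  shows "\<forall>u. qf N (Jm N A K th) u \<le> 0" and "\<exists>l<0. poly (char_poly (Defs.jacobian N A K th)) l = 0"
proof -
  obtain ls :: "real list" where ls: "length ls = N - 1" "\<forall>l\<in>set ls. l < 0"
    "char_poly (Defs.jacobian N A K th) = (\<Prod>l\<leftarrow>0 # ls. [:- l, 1:])"
    using st unfolding stable_jac_def by blast
  have roots: "\<forall>x. poly (char_poly (Defs.jacobian N A K th)) x = 0 \<longrightarrow> x \<le> 0"
    using ls(2) unfolding ls(3) poly_prod_root by auto
  show "\<forall>u. qf N (Jm N A K th) u \<le> 0"
    using nsd[OF jac_carrier jac_symm[OF adj] _ roots] N2 by simp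
  from ls(1) N2 obtain l where "l \<in> set ls" by (cases ls) auto
  then show "\<exists>l<0. poly (char_poly (Defs.jacobian N A K th)) l = 0"
    using ls(2) unfolding ls(3) poly_prod_root by auto
qed


lemma qf_unit:
  assumes k: "k < N"
  shows "qf N m (\<lambda>i. if i = k then 1 else 0) = m k k"
proof -
  have d: "(\<Sum>j<N. f j * (if j = k then 1 else 0)) = f k" for f :: "nat \<Rightarrow> real"
  proof -
    have "(\<Sum>j<N. f j * (if j = k then 1 else 0)) = (\<Sum>j<N. if j = k then f j else 0)"
      by (rule sum.cong) auto
    also have "\<dots> = f k" using k by simp
    finally show ?thesis .
  qed
  have "qf N m (\<lambda>i. if i = k then 1 else 0) = (\<Sum>i<N. (\<Sum>j<N. (m i j * (if i = k then 1 else 0)) * (if j = k then 1 else 0)))"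
    unfolding qf_def by simp
  also have "\<dots> = (\<Sum>i<N. m i k * (if i = k then 1 else 0))"
    by (rule sum.cong[OF refl], rule d)
  also have "\<dots> = m k k" by (rule d)
  finally show ?thesis .
qed

lemma deg_pos:
  assumes N2: "N \<ge> 2" and adj: "adjacency_ok N A" and conn: "graph_connected N A"
  shows "(\<Sum>i<N. Defs.degree N A i) > 0"
proof -
  have nn: "\<And>i j. i < N \<Longrightarrow> j < N \<Longrightarrow> A i j \<ge> 0" using adj unfolding adjacency_ok_def
    by (metis order.refl zero_le_one)
  have "(\<lambda>x y. x < N \<and> y < N \<and> A x y = 1)\<^sup>*\<^sup>* 0 1" using conn N2 unfolding graph_connected_def by simp
  then have "\<exists>y. y < N \<and> A 0 y = 1"
  proof (rule converse_rtranclpE)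
    assume "(0::nat) = 1" then show ?thesis by simp
  next
    fix y assume "0 < N \<and> y < N \<and> A 0 y = 1"
    then show ?thesis by blast
  qed
  then obtain y where y: "y < N" "A 0 y = 1" by blast
  have "A 0 y \<le> (\<Sum>j<N. A 0 j)" by (rule member_le_sum) (use y nn N2 in auto)
  then have d0: "Defs.degree N A 0 \<ge> 1" using y unfolding Defs.degree_def by simp
  have "Defs.degree N A 0 \<le> (\<Sum>i<N. Defs.degree N A i)"
    by (rule member_le_sum) (use N2 nn in \<open>auto simp: Defs.degree_def intro: sum_nonneg\<close>)
  then show ?thesis using d0 by simp
qed

lemma part1:
  assumes N2: "N \<ge> 2" and adj: "adjacency_ok N A" and conn: "graph_connected N A"
    and K: "K > 0" and st: "stable_steady_state N A om K th"
  shows "r_uni N A th > 0"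
proof -
  have sj: "stable_jac N (Defs.jacobian N A K th)" using st unfolding stable_steady_state_def by simp
  note nsdJ = stable_facts(1)[OF N2 adj sj]
  obtain l where l: "l < 0" "poly (char_poly (Defs.jacobian N A K th)) l = 0"
    using stable_facts(2)[OF N2 adj sj] by blast
  define R where "R k = (\<Sum>j<N. A k j * cos (th k - th j))" for k
  have qe: "qf N (Jm N A K th) (\<lambda>i. if i = k then 1 else 0) = - K * R k" if "k < N" for k
    using that by (simp add: qf_unit jac_entry R_def)
  have Rnn: "R k \<ge> 0" if "k < N" for k
  proof -
    have "- K * R k \<le> 0" using nsdJ qe[OF that] by metis
    then show ?thesis using K by (simp add: zero_le_mult_iff)
  qed
  have T: "(\<Sum>k<N. R k) > 0"
  proof (rule ccontr)
    assume "\<not> ?thesis"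
    moreover have "(\<Sum>k<N. R k) \<ge> 0" by (rule sum_nonneg) (use Rnn in simp)
    ultimately have "(\<Sum>k<N. R k) = 0" by linarith
    then have R0: "\<forall>k\<in>{..<N}. R k = 0" using Rnn by (subst sum_nonneg_eq_0_iff[symmetric]) auto
    have z: "\<forall>i<N. \<forall>k<N. Defs.jacobian N A K th $$ (i,k) = 0"
    proof (intro allI impI)
      fix i k assume i: "i < N" and k: "k < N"
      have "qf N (Jm N A K th) (\<lambda>i. if i = k then 1 else 0) = 0" using qe[OF k] R0 k by simp
      from ker[OF jac_symm[OF adj] nsdJ this] i
      have "(\<Sum>j<N. Jm N A K th i j * (if j = k then 1 else 0)) = 0" by blast
      then show "Defs.jacobian N A K th $$ (i,k) = 0" using k by (simp add: if_distrib cong: if_cong)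
    qed
    from zero_mat_root[OF jac_carrier z l(2)] l(1) show False by simp
  qed
  have "r_uni N A th = (\<Sum>k<N. R k) / (\<Sum>i<N. Defs.degree N A i)"
    unfolding r_uni_def R_def by simp
  then show ?thesis using T deg_pos[OF N2 adj conn] by simp
qed


lemma part2_deriv:
  assumes N2: "N \<ge> 2" and adj: "adjacency_ok N A" and conn: "graph_connected N A"
    and I: "open I" "I \<subseteq> {0<..}" and KI: "K \<in> I"
    and dths: "\<forall>i<N. \<forall>k\<in>I. ((\<lambda>k. ths k i) has_real_derivative d i k) (at k)"
    and st: "\<forall>k\<in>I. stable_steady_state N A om k (ths k)"
  shows "\<exists>D. ((\<lambda>k. r_uni N A (ths k)) has_real_derivative D) (at K) \<and> D \<ge> 0
           \<and> ((\<exists>i<N. om i \<noteq> 0) \<longrightarrow> D > 0)"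
proof -
  have K: "K > 0" using I KI by auto
  define th where "th = ths K"
  define v where "v i = d i K" for i
  have dv: "((\<lambda>k. ths k i) has_real_derivative v i) (at K)" if "i < N" for i
    using dths that KI unfolding v_def by blast
  have Asym: "A i j = A j i" if "i < N" "j < N" for i j using adj that unfolding adjacency_ok_def by blast
  define s where "s i = (\<Sum>j<N. A i j * sin (th j - th i))" for i
  have stK: "stable_steady_state N A om K th" using st KI th_def by simp
  have ss: "om i + K * s i = 0" if "i < N" for i
    using stK that unfolding stable_steady_state_def steady_state_def s_def by blast
  have sj: "stable_jac N (Defs.jacobian N A K th)" using stK unfolding stable_steady_state_def by simp
  note nsdJ = stable_facts(1)[OF N2 adj sj]
  \<comment> \<open>differentiated steady state equation\<close>
  have lin: "s i + (\<Sum>j<N. Jm N A K th i j * v j) = 0" if i: "i < N" for i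
  proof -
    define g where "g k = om i + k * (\<Sum>j<N. A i j * sin (ths k j - ths k i))" for k
    define G where "G = s i + K * (\<Sum>j<N. A i j * (cos (th j - th i) * (v j - v i)))"
    have dsin: "((\<lambda>k. A i j * sin (ths k j - ths k i)) has_real_derivative A i j * (cos (th j - th i) * (v j - v i))) (at K)"
      if j: "j < N" for j
      using dv[OF j] dv[OF i] unfolding th_def
      by (auto intro!: derivative_eq_intros)
    have dS: "((\<lambda>k. \<Sum>j<N. A i j * sin (ths k j - ths k i)) has_real_derivative (\<Sum>j<N. A i j * (cos (th j - th i) * (v j - v i)))) (at K)"
      by (rule DERIV_sum) (use dsin in auto)
    have dg0: "(g has_real_derivative (0 + (1 * (\<Sum>j<N. A i j * sin (ths K j - ths K i))
        + (\<Sum>j<N. A i j * (cos (th j - th i) * (v j - v i))) * K))) (at K)"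
      unfolding g_def by (intro DERIV_add DERIV_const DERIV_mult DERIV_ident dS)
    have "0 + (1 * (\<Sum>j<N. A i j * sin (ths K j - ths K i))
        + (\<Sum>j<N. A i j * (cos (th j - th i) * (v j - v i))) * K) = G"
      unfolding G_def s_def th_def by simp
    with dg0 have dg: "(g has_real_derivative G) (at K)" by simp
    have "((\<lambda>k. 0) has_real_derivative G) (at K)"
    proof (rule has_field_derivative_transform_within_open[OF dg I(1) KI])
      fix k assume "k \<in> I"
      then show "g k = 0" using st i unfolding g_def stable_steady_state_def steady_state_def by blast
    qed
    then have G0: "G = 0" using DERIV_const DERIV_unique by blast
    have "(\<Sum>j<N. Jm N A K th i j * v j) = K * (\<Sum>j<N. A i j * (cos (th j - th i) * (v j - v i)))"
    proof -
      have "(\<Sum>j<N. Jm N A K th i j * v j) = K * (\<Sum>j<N. A i j * cos (th i - th j) * (v j - v i))"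
        by (rule jac_row[OF adj i])
      also have "\<dots> = K * (\<Sum>j<N. A i j * (cos (th j - th i) * (v j - v i)))"
        by (simp add: cos_diff mult.commute mult.left_commute mult.assoc add.commute)
      finally show ?thesis .
    qed
    then show ?thesis using G0 G_def by simp
  qed
  define Sd where "Sd = (\<Sum>i<N. Defs.degree N A i)"
  have Sd: "Sd > 0" unfolding Sd_def by (rule deg_pos[OF N2 adj conn])
  define F' where "F' = (\<Sum>i<N. \<Sum>j<N. A i j * (- sin (th i - th j) * (v i - v j)))"
  have dF: "((\<lambda>k. \<Sum>i<N. \<Sum>j<N. A i j * cos (ths k i - ths k j)) has_real_derivative F') (at K)"
    unfolding F'_def
  proof (intro DERIV_sum)
    fix i j assume i: "i \<in> {..<N}" and j: "j \<in> {..<N}"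
    show "((\<lambda>k. A i j * cos (ths k i - ths k j)) has_real_derivative A i j * (- sin (th i - th j) * (v i - v j))) (at K)"
      using dv i j unfolding th_def by (auto intro!: derivative_eq_intros)
  qed
  have req: "(\<lambda>k. r_uni N A (ths k)) = (\<lambda>k. (\<Sum>i<N. \<Sum>j<N. A i j * cos (ths k i - ths k j)) / Sd)"
    unfolding r_uni_def Sd_def by simp
  have dr: "((\<lambda>k. r_uni N A (ths k)) has_real_derivative F' / Sd) (at K)"
    unfolding req by (rule DERIV_cdivide[OF dF])
  define T where "T = (\<Sum>i<N. \<Sum>j<N. A i j * sin (th j - th i) * v i)"
  have T_s: "T = (\<Sum>i<N. v i * s i)"
    unfolding T_def s_def by (simp add: sum_distrib_left mult.commute mult.left_commute)
  have swap: "(\<Sum>i<N. \<Sum>j<N. A i j * sin (th j - th i) * v j) = - T"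
  proof -
    have "(\<Sum>i<N. \<Sum>j<N. A i j * sin (th j - th i) * v j) = (\<Sum>j<N. \<Sum>i<N. A i j * sin (th j - th i) * v j)"
      by (rule sum.swap)
    also have "\<dots> = (\<Sum>j<N. \<Sum>i<N. - (A j i * sin (th i - th j) * v j))"
      by (intro sum.cong refl) (simp add: Asym sin_diff algebra_simps)
    also have "\<dots> = - T" unfolding T_def by (simp add: sum_negf)
    finally show ?thesis .
  qed
  have F'T: "F' = 2 * T"
  proof -
    have "F' = (\<Sum>i<N. \<Sum>j<N. A i j * sin (th j - th i) * v i - A i j * sin (th j - th i) * v j)"
      unfolding F'_def by (intro sum.cong refl) (simp add: sin_diff algebra_simps)
    also have "\<dots> = T - (\<Sum>i<N. \<Sum>j<N. A i j * sin (th j - th i) * v j)"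
      unfolding T_def by (simp add: sum_subtractf)
    finally show ?thesis using swap by simp
  qed
  have qT: "qf N (Jm N A K th) v = - T"
  proof -
    have "qf N (Jm N A K th) v = (\<Sum>i<N. v i * (\<Sum>j<N. Jm N A K th i j * v j))"
      unfolding qf_def by (simp add: sum_distrib_left mult.commute mult.left_commute)
    also have "\<dots> = (\<Sum>i<N. - (v i * s i))"
    proof (intro sum.cong refl)
      fix i assume "i \<in> {..<N}"
      then have "(\<Sum>j<N. Jm N A K th i j * v j) = - s i" using lin[of i] by simp
      then show "v i * (\<Sum>j<N. Jm N A K th i j * v j) = - (v i * s i)" by simp
    qed
    also have "\<dots> = - T" unfolding T_s by (simp add: sum_negf)
    finally show ?thesis .
  qed
  have F'q: "F' = - 2 * qf N (Jm N A K th) v" using F'T qT by simp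
  have F'nn: "F' \<ge> 0" using F'q nsdJ by (simp add: mult_le_0_iff)
  have F'pos: "F' > 0" if om: "\<exists>i<N. om i \<noteq> 0"
  proof (rule ccontr)
    assume "\<not> F' > 0"
    then have "F' = 0" using F'nn by simp
    then have q0: "qf N (Jm N A K th) v = 0" using F'q by simp
    from ker[OF jac_symm[OF adj] nsdJ q0]
    have "\<forall>i<N. s i = 0" using lin by (metis add.right_neutral)
    then have "\<forall>i<N. om i = 0" using ss by (metis add.right_neutral mult_zero_right)
    then show False using om by blast
  qed
  show ?thesis
    using dr F'nn F'pos Sd by (intro exI[of _ "F' / Sd"]) auto
qed

theorem theorem2:
  fixes N :: nat and A :: "nat \<Rightarrow> nat \<Rightarrow> real" and om :: "nat \<Rightarrow> real"
  assumes N2: "N \<ge> 2"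
    and adj: "adjacency_ok N A"
    and conn: "graph_connected N A"
    and om_sum: "(\<Sum>i<N. om i) = 0"
  shows "(\<forall>K th. K > 0 \<longrightarrow> stable_steady_state N A om K th \<longrightarrow> r_uni N A th > 0)
    \<and> (\<forall>(I :: real set) (ths :: real \<Rightarrow> nat \<Rightarrow> real).
         open I \<and> connected I \<and> I \<noteq> {} \<and> I \<subseteq> {0<..}
         \<and> (\<forall>i<N. \<exists>th' :: real \<Rightarrow> real.
               (\<forall>K\<in>I. ((\<lambda>k. ths k i) has_real_derivative th' K) (at K))
               \<and> continuous_on I th')
         \<and> (\<forall>K\<in>I. stable_steady_state N A om K (ths K))
         \<longrightarrow> mono_on I (\<lambda>K. r_uni N A (ths K))
           \<and> ((\<exists>i<N. om i \<noteq> 0) \<longrightarrow>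
                strict_mono_on I (\<lambda>K. r_uni N A (ths K))
                \<and> (\<forall>K\<in>I. \<exists>D. ((\<lambda>k. r_uni N A (ths k)) has_real_derivative D) (at K) \<and> D > 0)))"
proof (intro conjI allI impI)
  fix K th assume "K > (0::real)" "stable_steady_state N A om K th"
  then show "r_uni N A th > 0" using part1[OF N2 adj conn] by blast
next
  fix I :: "real set" and ths :: "real \<Rightarrow> nat \<Rightarrow> real"
  assume H: "open I \<and> connected I \<and> I \<noteq> {} \<and> I \<subseteq> {0<..}
         \<and> (\<forall>i<N. \<exists>th' :: real \<Rightarrow> real.
               (\<forall>K\<in>I. ((\<lambda>k. ths k i) has_real_derivative th' K) (at K))
               \<and> continuous_on I th')
         \<and> (\<forall>K\<in>I. stable_steady_state N A om K (ths K))"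
  then have I: "open I" "connected I" "I \<subseteq> {0<..}"
    and st: "\<forall>K\<in>I. stable_steady_state N A om K (ths K)" by auto
  have "\<forall>i. \<exists>f. i < N \<longrightarrow> (\<forall>K\<in>I. ((\<lambda>k. ths k i) has_real_derivative f K) (at K))"
    using H by blast
  then obtain d where "\<forall>i. i < N \<longrightarrow> (\<forall>K\<in>I. ((\<lambda>k. ths k i) has_real_derivative d i K) (at K))"
    by (metis choice)
  then have dths: "\<forall>i<N. \<forall>k\<in>I. ((\<lambda>k. ths k i) has_real_derivative d i k) (at k)" by blast
  note PD = part2_deriv[OF N2 adj conn I(1) I(3) _ dths st]
  let ?f = "\<lambda>K. r_uni N A (ths K)"
  show "mono_on I ?f"
  proof (rule mono_onI)
    fix x y assume x: "x \<in> I" and y: "y \<in> I" and xy: "x \<le> y"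
    have sub: "{x..y} \<subseteq> I" by (rule connected_contains_Icc[OF I(2) x y])
    show "?f x \<le> ?f y"
    proof (rule DERIV_nonneg_imp_increasing_open[OF xy])
      fix z assume "x < z" "z < y"
      then have "z \<in> I" using sub by auto
      from PD[OF this] show "\<exists>D. (?f has_real_derivative D) (at z) \<and> D \<ge> 0" by blast
    next
      show "continuous_on {x..y} ?f"
      proof (rule continuous_at_imp_continuous_on, rule ballI)
        fix z assume "z \<in> {x..y}"
        then have "z \<in> I" using sub by auto
        from PD[OF this] obtain D where "(?f has_real_derivative D) (at z)" by blast
        then show "isCont ?f z" by (rule DERIV_isCont)
      qed
    qed
  qed
next
  fix I :: "real set" and ths :: "real \<Rightarrow> nat \<Rightarrow> real"
  assume H: "open I \<and> connected I \<and> I \<noteq> {} \<and> I \<subseteq> {0<..}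
         \<and> (\<forall>i<N. \<exists>th' :: real \<Rightarrow> real.
               (\<forall>K\<in>I. ((\<lambda>k. ths k i) has_real_derivative th' K) (at K))
               \<and> continuous_on I th')
         \<and> (\<forall>K\<in>I. stable_steady_state N A om K (ths K))"
    and om: "\<exists>i<N. om i \<noteq> 0"
  then have I: "open I" "connected I" "I \<subseteq> {0<..}"
    and st: "\<forall>K\<in>I. stable_steady_state N A om K (ths K)" by auto
  have "\<forall>i. \<exists>f. i < N \<longrightarrow> (\<forall>K\<in>I. ((\<lambda>k. ths k i) has_real_derivative f K) (at K))"
    using H by blast
  then obtain d where "\<forall>i. i < N \<longrightarrow> (\<forall>K\<in>I. ((\<lambda>k. ths k i) has_real_derivative d i K) (at K))"
    by (metis choice)
  then have dths: "\<forall>i<N. \<forall>k\<in>I. ((\<lambda>k. ths k i) has_real_derivative d i k) (at k)" by blast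
  note PD = part2_deriv[OF N2 adj conn I(1) I(3) _ dths st]
  let ?f = "\<lambda>K. r_uni N A (ths K)"
  have PDp: "\<exists>D. (?f has_real_derivative D) (at z) \<and> D > 0" if "z \<in> I" for z
    using PD[OF that] om by blast
  show "strict_mono_on I ?f"
  proof (rule strict_mono_onI)
    fix x y assume x: "x \<in> I" and y: "y \<in> I" and xy: "x < y"
    have sub: "{x..y} \<subseteq> I" by (rule connected_contains_Icc[OF I(2) x y])
    show "?f x < ?f y"
    proof (rule DERIV_pos_imp_increasing[OF xy])
      fix z assume "x \<le> z" "z \<le> y"
      then have "z \<in> I" using sub by auto
      then show "\<exists>D. (?f has_real_derivative D) (at z) \<and> D > 0" by (rule PDp)
    qed
  qed
  show "\<forall>K\<in>I. \<exists>D. (?f has_real_derivative D) (at K) \<and> D > 0" using PDp by blast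
qed

end
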